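(* Let $n\ge1$ and let $S\subset[2n]$ be a signature in $[2n]$ with associated vector $(s(1),\dots,s(2n))$. Then the number of primary even-odd-descent permutations $\sigma\in\mathcal{X}_{2n}$ whose set of descent tops together with descent bottoms equals $S$ is $\prod_{i=1}^{2n} s(i)$.
   Context: For $\sigma\in\mathfrak{S}_m$, a descent is an index $i$ with $\sigma_i>\sigma_{i+1}$; $\sigma_i$ is a descent top and $\sigma_{i+1}$ a descent bottom. $\mathcal{X}_{2n}$ is the set of permutations of $[2n]$ in which every descent has even top and odd bottom. $\sigma\in\mathcal{X}_{2n}$ is primary even-odd-descent if for every descent top $t$ and every descent bottom $b$ of $\sigma$, $t>b$ implies $t-b\ge3$. A set $S\subseteq[2n]$ is a signature in $[2n]$ if: (i) $S$ has $k$ odd and $k$ even elements for some $k\ge0$; (ii) for each $j\in[n]$ at most one of $2j-1,2j$ lies in $S$; (iii) for every $i\in[2n]$, $S\cap\{1,\dots,i\}$ has at least as many odd as even elements. For $i\in[2n]$ let $f(i)$ (resp. $g(i)$) be the number of odd (resp. even) elements of $S$ less than $i$; the associated vector is $s(i)=f(i)-g(i)$ if $i\in S$ is even, and $s(i)=f(i)-g(i)+1$ otherwise (i.e., if $i\in S$ is odd or $i\notin S$). *)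

theory Defs
  imports "HOL-Combinatorics.Permutations"
begin

text \<open>Permutations of [m] = {1..m} are functions nat => nat permuting {1..m};
  sigma i is the entry at position i.\<close>

definition descents :: "(nat \<Rightarrow> nat) \<Rightarrow> nat \<Rightarrow> nat set" where
  "descents \<sigma> m = {i. 1 \<le> i \<and> i < m \<and> \<sigma> (Suc i) < \<sigma> i}"

definition desc_tops :: "(nat \<Rightarrow> nat) \<Rightarrow> nat \<Rightarrow> nat set" where
  "desc_tops \<sigma> m = \<sigma> ` descents \<sigma> m"

definition desc_bottoms :: "(nat \<Rightarrow> nat) \<Rightarrow> nat \<Rightarrow> nat set" where
  "desc_bottoms \<sigma> m = (\<lambda>i. \<sigma> (Suc i)) ` descents \<sigma> m"

definition X_set :: "nat \<Rightarrow> (nat \<Rightarrow> nat) set" where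
  "X_set n = {\<sigma>. \<sigma> permutes {1..2*n} \<and>
      (\<forall>i\<in>descents \<sigma> (2*n). even (\<sigma> i) \<and> odd (\<sigma> (Suc i)))}"

definition primary_eod :: "nat \<Rightarrow> (nat \<Rightarrow> nat) \<Rightarrow> bool" where
  "primary_eod n \<sigma> \<longleftrightarrow> \<sigma> \<in> X_set n \<and>
     (\<forall>t\<in>desc_tops \<sigma> (2*n). \<forall>b\<in>desc_bottoms \<sigma> (2*n). t > b \<longrightarrow> t - b \<ge> 3)"

definition is_signature :: "nat \<Rightarrow> nat set \<Rightarrow> bool" where
  "is_signature n S \<longleftrightarrow> S \<subseteq> {1..2*n} \<and>
     card {x\<in>S. odd x} = card {x\<in>S. even x} \<and>
     (\<forall>j\<in>{1..n}. \<not> (2*j - 1 \<in> S \<and> 2*j \<in> S)) \<and>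
     (\<forall>i\<in>{1..2*n}. card {x\<in>S. x \<le> i \<and> even x} \<le> card {x\<in>S. x \<le> i \<and> odd x})"

definition sig_f :: "nat set \<Rightarrow> nat \<Rightarrow> int" where
  "sig_f S i = int (card {x\<in>S. odd x \<and> x < i})"

definition sig_g :: "nat set \<Rightarrow> nat \<Rightarrow> int" where
  "sig_g S i = int (card {x\<in>S. even x \<and> x < i})"

definition sig_vec :: "nat set \<Rightarrow> nat \<Rightarrow> int" where
  "sig_vec S i = (if i \<in> S \<and> even i then sig_f S i - sig_g S i
                  else sig_f S i - sig_g S i + 1)"

end

theory Submission
  imports Defs
begin

fun vals :: "nat option list \<Rightarrow> nat list" where
  "vals [] = []"
| "vals (None # r) = vals r"
| "vals (Some a # r) = a # vals r"

definition nones :: "nat option list \<Rightarrow> nat" where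
  "nones u = length (filter (\<lambda>x. x = None) u)"

fun pok :: "nat option \<Rightarrow> nat option \<Rightarrow> bool" where
  "pok None None = False"
| "pok None (Some b) = odd b"
| "pok (Some a) None = True"
| "pok (Some a) (Some b) = (b < a \<longrightarrow> even a \<and> odd b)"

fun pm :: "nat option \<Rightarrow> nat option \<Rightarrow> nat set" where
  "pm None (Some b) = {b}"
| "pm (Some a) (Some b) = (if b < a then {a, b} else {})"
| "pm _ _ = {}"

fun pall :: "nat option list \<Rightarrow> bool" where
  "pall (x # y # r) = (pok x y \<and> pall (y # r))"
| "pall _ = True"

fun marks :: "nat option list \<Rightarrow> nat set" where
  "marks (x # y # r) = pm x y \<union> marks (y # r)"
| "marks _ = {}"

definition exc :: "nat set \<Rightarrow> int" where
  "exc S = int (card {x\<in>S. odd x}) - int (card {x\<in>S. even x})"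

definition V :: "nat \<Rightarrow> nat set \<Rightarrow> nat option list set" where
  "V m S = {u. distinct (vals u) \<and> set (vals u) = {1..m} \<and> int (nones u) = exc S
     \<and> pall u \<and> (u \<noteq> [] \<longrightarrow> last u \<noteq> None) \<and> marks u = S}"

lemma vals_append[simp]: "vals (xs @ ys) = vals xs @ vals ys"
  by (induction xs rule: vals.induct) auto

lemma Some_in_set: "Some a \<in> set u \<longleftrightarrow> a \<in> set (vals u)"
  by (induction u rule: vals.induct) auto

lemma nones_simps[simp]: "nones [] = 0" "nones (None # u) = Suc (nones u)"
  "nones (Some a # u) = nones u" "nones (xs @ ys) = nones xs + nones ys"
  by (auto simp: nones_def)

lemma length_vals: "length u = length (vals u) + nones u"
  by (induction u rule: vals.induct) auto

lemma pm_sub: "pm x y \<subseteq> set (vals [x, y])"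
  by (cases x; cases y) auto

lemma marks_sub: "marks u \<subseteq> set (vals u)"
proof (induction u rule: marks.induct)
  case (1 x y r)
  then show ?case using pm_sub[of x y] by (cases x; cases y) auto
qed auto

lemma marks_app[simp]: "marks (xs @ y # z # ys) = marks (xs @ [y]) \<union> pm y z \<union> marks (z # ys)"
proof (induction xs rule: induct_list012)
  case (3 a b xs)
  then show ?case by auto
qed auto

lemma pall_app[simp]: "pall (xs @ y # z # ys) = (pall (xs @ [y]) \<and> pok y z \<and> pall (z # ys))"
proof (induction xs rule: induct_list012)
  case (3 a b xs)
  then show ?case by auto
qed auto

lemma finite_V: "finite (V m S)"
proof -
  have "V m S \<subseteq> {u. set u \<subseteq> insert None (Some ` {1..m}) \<and> length u \<le> m + nat (exc S)}"
  proof
    fix u assume u: "u \<in> V m S"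
    have "length (vals u) = m" using u distinct_card[of "vals u"] by (auto simp: V_def)
    hence "length u \<le> m + nat (exc S)" using u length_vals[of u] by (auto simp: V_def)
    moreover have "set u \<subseteq> insert None (Some ` {1..m})"
    proof
      fix x assume "x \<in> set u"
      show "x \<in> insert None (Some ` {1..m})"
      proof (cases x)
        case (Some a)
        then have "a \<in> set (vals u)" using \<open>x \<in> set u\<close> Some_in_set by auto
        then show ?thesis using u Some by (auto simp: V_def)
      qed simp
    qed
    ultimately show "u \<in> {u. set u \<subseteq> insert None (Some ` {1..m}) \<and> length u \<le> m + nat (exc S)}"
      by auto
  qed
  then show ?thesis by (rule finite_subset) (rule finite_lists_length_le, auto)
qed

lemma count_gen:
  assumes "finite A" "\<And>u. u \<in> A \<Longrightarrow> card (J u) = c" "\<And>u. finite (J u)"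
    "inj_on F (SIGMA u:A. J u)" "F ` (SIGMA u:A. J u) = B"
  shows "card B = c * card A"
proof -
  have "card B = card (SIGMA u:A. J u)" using assms(4,5) card_image by blast
  also have "\<dots> = (\<Sum>u\<in>A. card (J u))" using assms by simp
  also have "\<dots> = c * card A" using assms(2) by simp
  finally show ?thesis .
qed

lemma cardJ2: "card {j. j < length u \<and> u!j = None} = nones u"
  by (simp add: nones_def length_filter_conv_card eq_commute)

lemma cardJ1: "card {j. j \<le> length u \<and> (j = length u \<or> u!j = None)} = nones u + 1"
proof -
  have "{j. j \<le> length u \<and> (j = length u \<or> u!j = None)} = insert (length u) {j. j < length u \<and> u!j = None}"
    by auto
  then show ?thesis using cardJ2[of u] by simp
qed

lemma pre_last:
  assumes "u \<in> V m S" "u = xs @ ys" "ys = [] \<or> (\<exists>ys'. ys = None # ys')"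
  shows "xs = [] \<or> (\<exists>xs' a. xs = xs' @ [Some a] \<and> a \<le> m)"
proof (cases xs rule: rev_cases)
  case (snoc xs' z)
  show ?thesis
  proof (cases z)
    case None
    then show ?thesis using assms snoc by (auto simp: V_def)
  next
    case (Some a)
    then have "a \<in> set (vals u)" using assms snoc by auto
    then show ?thesis using assms snoc Some by (auto simp: V_def)
  qed
qed simp

lemma set_helper: "set (vals u) = {1..m} \<Longrightarrow> x \<in> set (vals u) \<Longrightarrow> x \<le> m"
  by auto

lemma A_fwd:
  assumes "u \<in> V m S" "M = Suc m" "M \<notin> S" "u = xs @ ys" "ys = [] \<or> (\<exists>ys'. ys = None # ys')"
  shows "xs @ Some M # ys \<in> V M S"
proof -
  have u: "distinct (vals u)" "set (vals u) = {1..m}" "int (nones u) = exc S"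
     "pall u" "u \<noteq> [] \<longrightarrow> last u \<noteq> None" "marks u = S" using assms(1) by (auto simp: V_def)
  have Mn: "M \<notin> set (vals u)" using u(2) assms(2) by auto
  have st: "set (vals (xs @ Some M # ys)) = {1..M}" using u(2) assms(2,4) by auto
  have ds: "distinct (vals (xs @ Some M # ys))" using u(1) Mn assms(4) by auto
  have nn: "int (nones (xs @ Some M # ys)) = exc S" using u(3) assms(4) by simp
  have rest: "pall (xs @ Some M # ys) \<and> (xs @ Some M # ys \<noteq> [] \<longrightarrow> last (xs @ Some M # ys) \<noteq> None)
     \<and> marks (xs @ Some M # ys) = S"
    using pre_last[OF assms(1,4,5)] assms(5)
  proof (elim disjE exE conjE)
    assume "xs = []" "ys = []" then show ?thesis using u assms by auto
  next
    fix ys' assume "xs = []" "ys = None # ys'" then show ?thesis using u assms by auto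
  next
    fix xs' a assume "xs = xs' @ [Some a]" "a \<le> m" "ys = []" then show ?thesis using u assms by auto
  next
    fix xs' a ys' assume "xs = xs' @ [Some a]" "a \<le> m" "ys = None # ys'" then show ?thesis using u assms by auto
  qed
  show ?thesis using st ds nn rest by (auto simp: V_def)
qed

lemma split_max:
  assumes "w \<in> V M S" "M = Suc m"
  obtains xs ys where "w = xs @ Some M # ys" "M \<notin> set (vals xs)" "M \<notin> set (vals ys)"
    "set (vals xs @ vals ys) = {1..m}" "distinct (vals xs @ vals ys)"
proof -
  have w: "distinct (vals w)" "set (vals w) = {1..M}" using assms by (auto simp: V_def)
  then have "Some M \<in> set w" using Some_in_set assms(2) by auto
  then obtain xs ys where e: "w = xs @ Some M # ys" using split_list by metis
  have d: "distinct (vals xs @ M # vals ys)" using w e by simp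
  then have "set (vals xs @ vals ys) = {1..M} - {M}" using w e by auto
  also have "\<dots> = {1..m}" using assms(2) by auto
  finally show ?thesis using that e d by auto
qed

lemma A_bwd:
  assumes "w \<in> V M S" "M = Suc m" "M \<notin> S"
  shows "\<exists>xs ys. w = xs @ Some M # ys \<and> xs @ ys \<in> V m S \<and> (ys = [] \<or> (\<exists>ys'. ys = None # ys'))"
proof -
  obtain xs ys where e: "w = xs @ Some M # ys" "M \<notin> set (vals xs)" "M \<notin> set (vals ys)"
    "set (vals xs @ vals ys) = {1..m}" "distinct (vals xs @ vals ys)"
    using split_max[OF assms(1,2)] by metis
  have w: "int (nones w) = exc S" "pall w" "w \<noteq> [] \<longrightarrow> last w \<noteq> None" "marks w = S"
    using assms(1) by (auto simp: V_def)
  have sx: "xs = [] \<or> (\<exists>xs' a. xs = xs' @ [Some a])"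
  proof (cases xs rule: rev_cases)
    case (snoc xs' z)
    have "pm z (Some M) \<subseteq> marks w" using e(1) snoc by (cases ys) auto
    then show ?thesis using snoc assms(3) w(4) by (cases z) auto
  qed simp
  have sy: "ys = [] \<or> (\<exists>ys'. ys = None # ys')"
  proof (cases ys)
    case (Cons y ys')
    have "pm (Some M) y \<subseteq> marks w" using e(1) Cons by auto
    moreover have "\<forall>b. y = Some b \<longrightarrow> b < M"
    proof (intro allI impI)
      fix b assume "y = Some b"
      then have "b \<in> set (vals ys)" using Cons by auto
      then have "b \<in> set (vals xs @ vals ys)" by simp
      then show "b < M" using e(4) assms(2) by (metis atLeastAtMost_iff le_imp_less_Suc)
    qed
    ultimately show ?thesis using Cons assms(3) w(4) by (cases y) auto
  qed simp
  have P: "pall (xs @ ys) \<and> marks (xs @ ys) = S \<and> (xs @ ys \<noteq> [] \<longrightarrow> last (xs @ ys) \<noteq> None)"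
    using sx sy
  proof (elim disjE exE conjE)
    assume h: "xs = []" "ys = []"
    have "marks w = S" using w by auto
    then show ?thesis using h e(1) by simp
  next
    fix ys' assume h: "xs = []" "ys = None # ys'"
    have "pall w" "marks w = S" "last w \<noteq> None" using w e(1) by auto
    then show ?thesis using h e(1) by simp
  next
    fix xs' a assume h: "xs = xs' @ [Some a]" "ys = []"
    have pw: "pall w" "marks w = S" using w by auto
    have "a \<in> set (vals xs @ vals ys)" using h by simp
    then have "a < M" using e(4) assms(2) by (metis atLeastAtMost_iff le_imp_less_Suc)
    then show ?thesis using pw h e(1) \<open>a < M\<close> by simp
  next
    fix xs' a ys' assume h: "xs = xs' @ [Some a]" "ys = None # ys'"
    have pw: "pall w" "marks w = S" "last w \<noteq> None" using w e(1) by auto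
    have "a \<in> set (vals xs @ vals ys)" using h by simp
    then have "a < M" using e(4) assms(2) by (metis atLeastAtMost_iff le_imp_less_Suc)
    then show ?thesis using pw h e(1) \<open>a < M\<close> by simp
  qed
  have "int (nones (xs @ ys)) = exc S" using w(1) e(1) by simp
  then have "xs @ ys \<in> V m S" using P e(4,5) by (simp add: V_def)
  then show ?thesis using e sy by blast
qed

lemma ins_inj:
  assumes "Some M \<notin> set u" "Some M \<notin> set u'" "Some M \<notin> set p" "j \<le> length u" "j' \<le> length u'"
    "take j u @ p @ Some M # drop j u = take j' u' @ p @ Some M # drop j' u'"
  shows "u = u' \<and> j = j'"
proof -
  have a: "Some M \<notin> set (take j u @ p)" "Some M \<notin> set (drop j u)"
    using assms(1,3) in_set_takeD in_set_dropD by fastforce+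
  have "(take j u @ p) @ Some M # drop j u = (take j' u' @ p) @ Some M # drop j' u'"
    using assms(6) by simp
  then have "take j u @ p = take j' u' @ p \<and> drop j u = drop j' u'"
    using append_Cons_eq_iff[OF a] by blast
  then have "take j u = take j' u'" "drop j u = drop j' u'" by auto
  then show ?thesis using assms(4,5)
    by (metis append_take_drop_id length_take min.absorb2)
qed

lemma notin_V: "u \<in> V m S \<Longrightarrow> M = Suc m \<Longrightarrow> Some M \<notin> set u"
  using Some_in_set[of M u] by (auto simp: V_def)

lemma card_A:
  assumes "M = Suc m" "M \<notin> S"
  shows "card (V M S) = nat (exc S + 1) * card (V m S)"
proof (rule count_gen[where J = "\<lambda>u. {j. j \<le> length u \<and> (j = length u \<or> u!j = None)}"
      and F = "\<lambda>(u,j). take j u @ Some M # drop j u"])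
  show "finite (V m S)" by (rule finite_V)
  show "card {j. j \<le> length u \<and> (j = length u \<or> u!j = None)} = nat (exc S + 1)" if "u \<in> V m S" for u
    using cardJ1[of u] that by (auto simp: V_def)
  show "finite {j. j \<le> length u \<and> (j = length u \<or> u!j = None)}" for u
    by (rule finite_subset[of _ "{..length u}"]) auto
  show "inj_on (\<lambda>(u,j). take j u @ Some M # drop j u)
      (SIGMA u:V m S. {j. j \<le> length u \<and> (j = length u \<or> u!j = None)})"
  proof (rule inj_onI, clarify)
    fix u j u' j'
    assume h: "u \<in> V m S" "u' \<in> V m S" "j \<le> length u" "j' \<le> length u'"
      "take j u @ Some M # drop j u = take j' u' @ Some M # drop j' u'"
    show "u = u' \<and> j = j'"
      using ins_inj[of M u u' "[]" j j'] h notin_V assms(1) by auto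
  qed
  show "(\<lambda>(u,j). take j u @ Some M # drop j u) `
      (SIGMA u:V m S. {j. j \<le> length u \<and> (j = length u \<or> u!j = None)}) = V M S"
  proof
    show "(\<lambda>(u,j). take j u @ Some M # drop j u) `
      (SIGMA u:V m S. {j. j \<le> length u \<and> (j = length u \<or> u!j = None)}) \<subseteq> V M S"
    proof clarify
      fix u j assume h: "u \<in> V m S" "j \<le> length u" "j = length u \<or> u!j = None"
      have "drop j u = [] \<or> (\<exists>ys'. drop j u = None # ys')"
      proof (cases "j = length u")
        case False
        then have "j < length u" using h by auto
        then show ?thesis using h(3) False Cons_nth_drop_Suc by metis
      qed simp
      then show "take j u @ Some M # drop j u \<in> V M S"
        using A_fwd[OF h(1) assms, of "take j u" "drop j u"] by simp
    qed
    show "V M S \<subseteq> (\<lambda>(u,j). take j u @ Some M # drop j u) `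
      (SIGMA u:V m S. {j. j \<le> length u \<and> (j = length u \<or> u!j = None)})"
    proof
      fix w assume "w \<in> V M S"
      then obtain xs ys where e: "w = xs @ Some M # ys" "xs @ ys \<in> V m S" "ys = [] \<or> (\<exists>ys'. ys = None # ys')"
        using A_bwd assms by blast
      have "length xs \<le> length (xs @ ys) \<and> (length xs = length (xs @ ys) \<or> (xs @ ys) ! length xs = None)"
        using e(3) by auto
      moreover have "w = take (length xs) (xs @ ys) @ Some M # drop (length xs) (xs @ ys)" using e(1) by simp
      ultimately show "w \<in> (\<lambda>(u,j). take j u @ Some M # drop j u) `
        (SIGMA u:V m S. {j. j \<le> length u \<and> (j = length u \<or> u!j = None)})"
        using e(2) by (intro image_eqI[where x = "(xs @ ys, length xs)"]) auto
    qed
  qed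
qed

lemma exc_insert:
  assumes "finite S" "M \<notin> S"
  shows "exc (insert M S) = exc S + (if odd M then 1 else -1)"
proof (cases "odd M")
  case True
  have "{x \<in> insert M S. odd x} = insert M {x\<in>S. odd x}" "{x \<in> insert M S. even x} = {x\<in>S. even x}"
    using True by auto
  then show ?thesis using assms True by (simp add: exc_def)
next
  case False
  have "{x \<in> insert M S. odd x} = {x\<in>S. odd x}" "{x \<in> insert M S. even x} = insert M {x\<in>S. even x}"
    using False by auto
  then show ?thesis using assms False by (simp add: exc_def)
qed

lemma B_fwd:
  assumes "u \<in> V m S" "M = Suc m" "odd M" "M \<notin> S" "u = xs @ ys" "ys = [] \<or> (\<exists>ys'. ys = None # ys')"
  shows "xs @ None # Some M # ys \<in> V M (insert M S)"
proof -
  have u: "distinct (vals u)" "set (vals u) = {1..m}" "int (nones u) = exc S"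
     "pall u" "u \<noteq> [] \<longrightarrow> last u \<noteq> None" "marks u = S" using assms(1) by (auto simp: V_def)
  have fin: "finite S" using u(6) marks_sub[of u] finite_subset by blast
  have Mn: "M \<notin> set (vals u)" using u(2) assms(2) by auto
  have st: "set (vals (xs @ None # Some M # ys)) = {1..M}" using u(2) assms(2,5) by auto
  have ds: "distinct (vals (xs @ None # Some M # ys))" using u(1) Mn assms(5) by auto
  have nn: "int (nones (xs @ None # Some M # ys)) = exc (insert M S)"
    using u(3) assms(5) exc_insert[OF fin assms(4)] assms(3) by simp
  have rest: "pall (xs @ None # Some M # ys) \<and> (xs @ None # Some M # ys \<noteq> [] \<longrightarrow> last (xs @ None # Some M # ys) \<noteq> None)
     \<and> marks (xs @ None # Some M # ys) = insert M S"
    using pre_last[OF assms(1,5,6)] assms(6)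
  proof (elim disjE exE conjE)
    assume "xs = []" "ys = []" then show ?thesis using u assms by auto
  next
    fix ys' assume "xs = []" "ys = None # ys'" then show ?thesis using u assms by auto
  next
    fix xs' a assume "xs = xs' @ [Some a]" "a \<le> m" "ys = []" then show ?thesis using u assms by auto
  next
    fix xs' a ys' assume "xs = xs' @ [Some a]" "a \<le> m" "ys = None # ys'" then show ?thesis using u assms by auto
  qed
  show ?thesis using st ds nn rest by (auto simp: V_def)
qed

lemma C_fwd:
  assumes "u \<in> V m S" "M = Suc m" "even M" "M \<notin> S" "u = xs @ None # ys"
  shows "xs @ Some M # ys \<in> V M (insert M S)"
proof -
  have u: "distinct (vals u)" "set (vals u) = {1..m}" "int (nones u) = exc S"
     "pall u" "u \<noteq> [] \<longrightarrow> last u \<noteq> None" "marks u = S" using assms(1) by (auto simp: V_def)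
  have fin: "finite S" using u(6) marks_sub[of u] finite_subset by blast
  have Mn: "M \<notin> set (vals u)" using u(2) assms(2) by auto
  have st: "set (vals (xs @ Some M # ys)) = {1..M}" using u(2) assms(2,5) by auto
  have ds: "distinct (vals (xs @ Some M # ys))" using u(1) Mn assms(5) by auto
  have nn: "int (nones (xs @ Some M # ys)) = exc (insert M S)"
    using u(3) assms(5) exc_insert[OF fin assms(4)] assms(3) by simp
  obtain b ys' where yb: "ys = Some b # ys'" "odd b" "b \<le> m"
  proof (cases ys)
    case Nil then show ?thesis using u(5) assms(5) by simp
  next
    case (Cons y ys')
    show ?thesis
    proof (cases y)
      case None then show ?thesis using u(4) assms(5) Cons by simp
    next
      case (Some b)
      have "pok None (Some b)" using u(4) assms(5) Cons Some by simp
      moreover have "b \<in> set (vals u)" using assms(5) Cons Some by simp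
      ultimately show ?thesis using that Cons Some u(2) by auto
    qed
  qed
  have pl: "xs = [] \<or> (\<exists>xs' a. xs = xs' @ [Some a] \<and> a \<le> m)"
    using pre_last[OF assms(1), of xs "None # ys"] assms(5) by simp
  have rest: "pall (xs @ Some M # ys) \<and> (xs @ Some M # ys \<noteq> [] \<longrightarrow> last (xs @ Some M # ys) \<noteq> None)
     \<and> marks (xs @ Some M # ys) = insert M S"
    using pl
  proof (elim disjE exE conjE)
    assume "xs = []" then show ?thesis using u assms yb by auto
  next
    fix xs' a assume "xs = xs' @ [Some a]" "a \<le> m" then show ?thesis using u assms yb by auto
  qed
  show ?thesis using st ds nn rest by (auto simp: V_def)
qed

lemma insert_cancel:
  assumes "M \<notin> A" "M \<notin> B" "insert M A = insert M B" shows "A = B"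
proof -
  have "A = insert M A - {M}" using assms(1) by simp
  also have "\<dots> = insert M B - {M}" using assms(3) by simp
  also have "\<dots> = B" using assms(2) by simp
  finally show ?thesis .
qed

lemma B_bwd:
  assumes "w \<in> V M (insert M S)" "M = Suc m" "odd M" "M \<notin> S"
  shows "\<exists>xs ys. w = xs @ None # Some M # ys \<and> xs @ ys \<in> V m S \<and> (ys = [] \<or> (\<exists>ys'. ys = None # ys'))"
proof -
  obtain xs0 ys where e: "w = xs0 @ Some M # ys" "M \<notin> set (vals xs0)" "M \<notin> set (vals ys)"
    "set (vals xs0 @ vals ys) = {1..m}" "distinct (vals xs0 @ vals ys)"
    using split_max[OF assms(1,2)] by metis
  have w: "int (nones w) = exc (insert M S)" "pall w" "w \<noteq> [] \<longrightarrow> last w \<noteq> None" "marks w = insert M S"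
    using assms(1) by (auto simp: V_def)
  have "S \<subseteq> set (vals w)" using w(4) marks_sub[of w] by auto
  then have fin: "finite S" using finite_subset by blast
  have sy: "ys = [] \<or> (\<exists>ys'. ys = None # ys')"
  proof (cases ys)
    case (Cons y ys')
    have "pok (Some M) y" using w(2) e(1) Cons by simp
    moreover have "\<forall>b. y = Some b \<longrightarrow> b < M"
    proof (intro allI impI)
      fix b assume "y = Some b"
      then have "b \<in> set (vals xs0 @ vals ys)" using Cons by auto
      then show "b < M" using e(4) assms(2) by (metis atLeastAtMost_iff le_imp_less_Suc)
    qed
    ultimately show ?thesis using Cons assms(3) by (cases y) auto
  qed simp
  have nM: "M \<notin> marks (Some M # ys)"
    using sy
  proof (elim disjE exE)
    fix ys' assume h: "ys = None # ys'"
    have "marks (None # ys') \<subseteq> set (vals ys)" using marks_sub[of "None # ys'"] h by simp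
    then show ?thesis using h e(3) by auto
  qed simp
  have Mw: "M \<in> marks w" using w(4) by simp
  obtain xs1 where x1: "xs0 = xs1 @ [None]"
  proof (cases xs0 rule: rev_cases)
    case Nil
    then show ?thesis using Mw nM e(1) by simp
  next
    case (snoc xs1 z)
    have mw: "marks w = marks (xs1 @ [z]) \<union> pm z (Some M) \<union> marks (Some M # ys)"
      using e(1) snoc by (cases ys) auto
    have "M \<notin> marks (xs1 @ [z])" using marks_sub[of "xs1 @ [z]"] e(2) snoc by auto
    then have "M \<in> pm z (Some M)" using mw Mw nM by auto
    moreover have "\<forall>a. z = Some a \<longrightarrow> a < M"
    proof (intro allI impI)
      fix a assume "z = Some a"
      then have "a \<in> set (vals xs0 @ vals ys)" using snoc by auto
      then show "a < M" using e(4) assms(2) by (metis atLeastAtMost_iff le_imp_less_Suc)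
    qed
    ultimately have "z = None" by (cases z) auto
    then show ?thesis using that snoc by simp
  qed
  have sx: "xs1 = [] \<or> (\<exists>xs2 a. xs1 = xs2 @ [Some a])"
  proof (cases xs1 rule: rev_cases)
    case (snoc xs2 z)
    then show ?thesis using w(2) e(1) x1 by (cases z) auto
  qed simp
  have w': "w = xs1 @ None # Some M # ys" using e(1) x1 by simp
  have P: "pall (xs1 @ ys) \<and> marks w = insert M (marks (xs1 @ ys)) \<and> (xs1 @ ys \<noteq> [] \<longrightarrow> last (xs1 @ ys) \<noteq> None)"
    using sx sy
  proof (elim disjE exE conjE)
    assume h: "xs1 = []" "ys = []"
    then show ?thesis using w' by simp
  next
    fix ys' assume h: "xs1 = []" "ys = None # ys'"
    have pw: "pall w" "last w \<noteq> None" using w w' by auto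
    then show ?thesis using h w' by simp
  next
    fix xs' a assume h: "xs1 = xs' @ [Some a]" "ys = []"
    have pw: "pall w" using w by auto
    then show ?thesis using h w' by simp
  next
    fix xs' a ys' assume h: "xs1 = xs' @ [Some a]" "ys = None # ys'"
    have pw: "pall w" "last w \<noteq> None" using w w' by auto
    then show ?thesis using h w' by simp
  qed
  have "M \<notin> marks (xs1 @ ys)" using marks_sub[of "xs1 @ ys"] e(2,3) x1 by auto
  then have mk: "marks (xs1 @ ys) = S" using insert_cancel[of M "marks (xs1 @ ys)" S] P w(4) assms(4) by auto
  have "int (nones (xs1 @ ys)) = exc S"
    using w(1) w' exc_insert[OF fin assms(4)] assms(3) by simp
  then have "xs1 @ ys \<in> V m S" using P mk e(4,5) x1 by (simp add: V_def)
  then show ?thesis using w' sy by blast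
qed

lemma C_bwd:
  assumes "w \<in> V M (insert M S)" "M = Suc m" "even M" "M \<notin> S"
  shows "\<exists>xs ys. w = xs @ Some M # ys \<and> xs @ None # ys \<in> V m S"
proof -
  obtain xs ys0 where e: "w = xs @ Some M # ys0" "M \<notin> set (vals xs)" "M \<notin> set (vals ys0)"
    "set (vals xs @ vals ys0) = {1..m}" "distinct (vals xs @ vals ys0)"
    using split_max[OF assms(1,2)] by metis
  have w: "int (nones w) = exc (insert M S)" "pall w" "w \<noteq> [] \<longrightarrow> last w \<noteq> None" "marks w = insert M S"
    using assms(1) by (auto simp: V_def)
  have "S \<subseteq> set (vals w)" using w(4) marks_sub[of w] by auto
  then have fin: "finite S" using finite_subset by blast
  have sx: "xs = [] \<or> (\<exists>xs' a. xs = xs' @ [Some a] \<and> a < M)"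
  proof (cases xs rule: rev_cases)
    case (snoc xs' z)
    have "pok z (Some M)" using w(2) e(1) snoc by (cases ys0) auto
    moreover have "\<forall>a. z = Some a \<longrightarrow> a < M"
    proof (intro allI impI)
      fix a assume "z = Some a"
      then have "a \<in> set (vals xs @ vals ys0)" using snoc by auto
      then show "a < M" using e(4) assms(2) by (metis atLeastAtMost_iff le_imp_less_Suc)
    qed
    ultimately show ?thesis using snoc assms(3) by (cases z) auto
  qed simp
  have mx: "marks (xs @ [Some M]) = marks xs"
    using sx by (elim disjE exE conjE) simp_all
  have Mw: "M \<in> marks w" using w(4) by simp
  obtain b ys where yb: "ys0 = Some b # ys" "b < M" "odd b"
  proof (cases ys0)
    case Nil
    then have "marks w = marks xs" using e(1) mx by simp
    then show ?thesis using Mw marks_sub[of xs] e(2) by auto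
  next
    case (Cons y ys)
    show ?thesis
    proof (cases y)
      case None
      have "marks w = marks xs \<union> marks (None # ys)" using e(1) mx Cons None by simp
      moreover have "marks (None # ys) \<subseteq> set (vals ys0)" using marks_sub[of "None # ys"] Cons None by simp
      ultimately show ?thesis using Mw marks_sub[of xs] e(2,3) by auto
    next
      case (Some b)
      have "b \<in> set (vals xs @ vals ys0)" using Cons Some by auto
      then have "b < M" using e(4) assms(2) by (metis atLeastAtMost_iff le_imp_less_Suc)
      moreover have "pok (Some M) (Some b)" using w(2) e(1) Cons Some by simp
      ultimately show ?thesis using that Cons Some by auto
    qed
  qed
  have mxN: "marks (xs @ [None]) = marks xs"
    using sx by (elim disjE exE conjE) simp_all
  let ?u = "xs @ None # Some b # ys"
  have "marks w = marks (xs @ [Some M]) \<union> pm (Some M) (Some b) \<union> marks (Some b # ys)"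
    using e(1) yb by simp
  moreover have "marks ?u = marks (xs @ [None]) \<union> pm None (Some b) \<union> marks (Some b # ys)"
    by simp
  ultimately have mw: "marks w = insert M (marks ?u)" using yb mx mxN by auto
  have pw: "pall (xs @ Some M # Some b # ys)" using w(2) e(1) yb by simp
  have pu: "pall ?u" using sx
  proof (elim disjE exE conjE)
    assume "xs = []" then show ?thesis using pw yb by simp
  next
    fix xs' a assume "xs = xs' @ [Some a]" "a < M" then show ?thesis using pw yb by simp
  qed
  have lu: "last ?u \<noteq> None" using w(3) e(1) yb by simp
  have "M \<notin> marks ?u" using marks_sub[of ?u] e(2,3) yb by auto
  then have mk: "marks ?u = S" using insert_cancel[of M "marks ?u" S] mw w(4) assms(4) by auto
  have "int (nones ?u) = exc S"
    using w(1) e(1) yb exc_insert[OF fin assms(4)] assms(3) by simp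
  then have "?u \<in> V m S" using pu lu mk e(4,5) yb by (simp add: V_def)
  then show ?thesis using e(1) yb by blast
qed

lemma card_B:
  assumes "M = Suc m" "odd M" "M \<notin> S"
  shows "card (V M (insert M S)) = nat (exc S + 1) * card (V m S)"
proof (rule count_gen[where J = "\<lambda>u. {j. j \<le> length u \<and> (j = length u \<or> u!j = None)}"
      and F = "\<lambda>(u,j). take j u @ None # Some M # drop j u"])
  show "finite (V m S)" by (rule finite_V)
  show "card {j. j \<le> length u \<and> (j = length u \<or> u!j = None)} = nat (exc S + 1)" if "u \<in> V m S" for u
    using cardJ1[of u] that by (auto simp: V_def)
  show "finite {j. j \<le> length u \<and> (j = length u \<or> u!j = None)}" for u
    by (rule finite_subset[of _ "{..length u}"]) auto
  show "inj_on (\<lambda>(u,j). take j u @ None # Some M # drop j u)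
      (SIGMA u:V m S. {j. j \<le> length u \<and> (j = length u \<or> u!j = None)})"
  proof (rule inj_onI, clarify)
    fix u j u' j'
    assume h: "u \<in> V m S" "u' \<in> V m S" "j \<le> length u" "j' \<le> length u'"
      "take j u @ None # Some M # drop j u = take j' u' @ None # Some M # drop j' u'"
    show "u = u' \<and> j = j'"
      using ins_inj[of M u u' "[None]" j j'] h notin_V assms(1) by auto
  qed
  show "(\<lambda>(u,j). take j u @ None # Some M # drop j u) `
      (SIGMA u:V m S. {j. j \<le> length u \<and> (j = length u \<or> u!j = None)}) = V M (insert M S)"
  proof
    show "(\<lambda>(u,j). take j u @ None # Some M # drop j u) `
      (SIGMA u:V m S. {j. j \<le> length u \<and> (j = length u \<or> u!j = None)}) \<subseteq> V M (insert M S)"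
    proof clarify
      fix u j assume h: "u \<in> V m S" "j \<le> length u" "j = length u \<or> u!j = None"
      have "drop j u = [] \<or> (\<exists>ys'. drop j u = None # ys')"
      proof (cases "j = length u")
        case False
        then have "j < length u" using h by auto
        then show ?thesis using h(3) False Cons_nth_drop_Suc by metis
      qed simp
      then show "take j u @ None # Some M # drop j u \<in> V M (insert M S)"
        using B_fwd[OF h(1) assms, of "take j u" "drop j u"] by simp
    qed
    show "V M (insert M S) \<subseteq> (\<lambda>(u,j). take j u @ None # Some M # drop j u) `
      (SIGMA u:V m S. {j. j \<le> length u \<and> (j = length u \<or> u!j = None)})"
    proof
      fix w assume "w \<in> V M (insert M S)"
      then obtain xs ys where e: "w = xs @ None # Some M # ys" "xs @ ys \<in> V m S" "ys = [] \<or> (\<exists>ys'. ys = None # ys')"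
        using B_bwd assms by blast
      have "length xs \<le> length (xs @ ys) \<and> (length xs = length (xs @ ys) \<or> (xs @ ys) ! length xs = None)"
        using e(3) by auto
      moreover have "w = take (length xs) (xs @ ys) @ None # Some M # drop (length xs) (xs @ ys)" using e(1) by simp
      ultimately show "w \<in> (\<lambda>(u,j). take j u @ None # Some M # drop j u) `
        (SIGMA u:V m S. {j. j \<le> length u \<and> (j = length u \<or> u!j = None)})"
        using e(2) by (intro image_eqI[where x = "(xs @ ys, length xs)"]) auto
    qed
  qed
qed

lemma card_C:
  assumes "M = Suc m" "even M" "M \<notin> S"
  shows "card (V M (insert M S)) = nat (exc S) * card (V m S)"
proof (rule count_gen[where J = "\<lambda>u. {j. j < length u \<and> u!j = None}"
      and F = "\<lambda>(u,j). take j u @ Some M # drop (Suc j) u"])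
  show "finite (V m S)" by (rule finite_V)
  show "card {j. j < length u \<and> u!j = None} = nat (exc S)" if "u \<in> V m S" for u
    using cardJ2[of u] that by (auto simp: V_def)
  show "finite {j. j < length u \<and> u!j = None}" for u
    by (rule finite_subset[of _ "{..length u}"]) auto
  show "inj_on (\<lambda>(u,j). take j u @ Some M # drop (Suc j) u)
      (SIGMA u:V m S. {j. j < length u \<and> u!j = None})"
  proof (rule inj_onI, clarify)
    fix u j u' j'
    assume h: "u \<in> V m S" "u' \<in> V m S" "j < length u" "u!j = None" "j' < length u'" "u'!j' = None"
      "take j u @ Some M # drop (Suc j) u = take j' u' @ Some M # drop (Suc j') u'"
    have a: "Some M \<notin> set (take j u)" "Some M \<notin> set (drop (Suc j) u)"
      using notin_V[OF h(1) assms(1)] in_set_takeD in_set_dropD by fastforce+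
    have e: "take j u = take j' u'" "drop (Suc j) u = drop (Suc j') u'"
      using append_Cons_eq_iff[OF a] h(7) by blast+
    have jj: "j = j'" using e(1) h(3,5) by (metis length_take min.absorb4 min.strict_order_iff)
    have "u = take j u @ u!j # drop (Suc j) u" using h(3) id_take_nth_drop by blast
    also have "\<dots> = take j' u' @ u'!j' # drop (Suc j') u'" using e h(4,6) by simp
    also have "\<dots> = u'" using h(5) id_take_nth_drop[symmetric] by blast
    finally show "u = u' \<and> j = j'" using jj by simp
  qed
  show "(\<lambda>(u,j). take j u @ Some M # drop (Suc j) u) `
      (SIGMA u:V m S. {j. j < length u \<and> u!j = None}) = V M (insert M S)"
  proof
    show "(\<lambda>(u,j). take j u @ Some M # drop (Suc j) u) `
      (SIGMA u:V m S. {j. j < length u \<and> u!j = None}) \<subseteq> V M (insert M S)"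
    proof clarify
      fix u j assume h: "u \<in> V m S" "j < length u" "u!j = None"
      have "u = take j u @ None # drop (Suc j) u" using h(2,3) id_take_nth_drop by metis
      then show "take j u @ Some M # drop (Suc j) u \<in> V M (insert M S)"
        using C_fwd[OF h(1) assms] by blast
    qed
    show "V M (insert M S) \<subseteq> (\<lambda>(u,j). take j u @ Some M # drop (Suc j) u) `
      (SIGMA u:V m S. {j. j < length u \<and> u!j = None})"
    proof
      fix w assume "w \<in> V M (insert M S)"
      then obtain xs ys where e: "w = xs @ Some M # ys" "xs @ None # ys \<in> V m S"
        using C_bwd assms by blast
      have "length xs < length (xs @ None # ys) \<and> (xs @ None # ys) ! length xs = None"
        by simp
      moreover have "w = take (length xs) (xs @ None # ys) @ Some M # drop (Suc (length xs)) (xs @ None # ys)"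
        using e(1) by simp
      ultimately show "w \<in> (\<lambda>(u,j). take j u @ Some M # drop (Suc j) u) `
        (SIGMA u:V m S. {j. j < length u \<and> u!j = None})"
        using e(2) by (intro image_eqI[where x = "(xs @ None # ys, length xs)"]) auto
    qed
  qed
qed

lemma V_neg: "exc S < 0 \<Longrightarrow> V m S = {}"
  by (auto simp: V_def)

lemma V_zero: "V 0 {} = {[]}"
proof
  show "V 0 {} \<subseteq> {[]}"
  proof
    fix u assume "u \<in> V 0 {}"
    then have "vals u = []" "nones u = 0" by (auto simp: V_def exc_def)
    then show "u \<in> {[]}" using length_vals[of u] by simp
  qed
  show "{[]} \<subseteq> V 0 {}" by (simp add: V_def exc_def)
qed

lemma sigfg:
  assumes "S \<subseteq> {1..M}"
  shows "sig_f S M - sig_g S M = exc (S - {M})"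
proof -
  have "{x\<in>S. odd x \<and> x < M} = {x \<in> S - {M}. odd x}" "{x\<in>S. even x \<and> x < M} = {x \<in> S - {M}. even x}"
    using assms by fastforce+
  then show ?thesis by (simp add: sig_f_def sig_g_def exc_def)
qed

lemma sig_vec_eq:
  assumes "i \<le> m"
  shows "sig_vec S i = sig_vec (S - {Suc m}) i"
proof -
  have "{x\<in>S. odd x \<and> x < i} = {x \<in> S - {Suc m}. odd x \<and> x < i}"
       "{x\<in>S. even x \<and> x < i} = {x \<in> S - {Suc m}. even x \<and> x < i}"
    using assms by auto
  moreover have "i \<in> S \<longleftrightarrow> i \<in> S - {Suc m}" using assms by auto
  ultimately show ?thesis by (simp add: sig_vec_def sig_f_def sig_g_def)
qed

lemma nat_mult_int: "(e < 0 \<Longrightarrow> c = 0) \<Longrightarrow> int (nat e * c) = e * int c"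
  by (cases "e < 0") auto

lemma main_count:
  "S \<subseteq> {1..m} \<Longrightarrow> int (card (V m S)) = (\<Prod>i=1..m. sig_vec S i)"
proof (induction m arbitrary: S)
  case 0
  then have "S = {}" by auto
  then show ?case using V_zero by simp
next
  case (Suc m)
  define M where "M = Suc m"
  define S' where "S' = S - {M}"
  have sub: "S' \<subseteq> {1..m}" using Suc.prems by (auto simp: S'_def M_def)
  have fin: "finite S'" using sub finite_subset by blast
  have IH: "int (card (V m S')) = (\<Prod>i=1..m. sig_vec S' i)" using Suc.IH[OF sub] .
  have pr0: "(\<Prod>i=1..Suc m. sig_vec S i) = (\<Prod>i=1..m. sig_vec S i) * sig_vec S (Suc m)"
    by simp
  have pr1: "(\<Prod>i=1..m. sig_vec S i) = (\<Prod>i=1..m. sig_vec S' i)"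
    by (rule prod.cong) (auto simp: S'_def M_def intro: sig_vec_eq)
  have pr: "(\<Prod>i=1..M. sig_vec S i) = (\<Prod>i=1..m. sig_vec S' i) * sig_vec S M"
    using pr0 pr1 by (simp add: M_def)
  have fg: "sig_f S M - sig_g S M = exc S'" using sigfg[of S M] Suc.prems by (simp add: S'_def M_def)
  have neg: "exc S' < 0 \<Longrightarrow> card (V m S') = 0" using V_neg by simp
  show ?case
  proof (cases "M \<in> S")
    case False
    then have "S' = S" by (simp add: S'_def)
    then have "card (V M S) = nat (exc S' + 1) * card (V m S')" using card_A[of M m S] False M_def by simp
    moreover have "sig_vec S M = exc S' + 1" using fg False by (simp add: sig_vec_def)
    ultimately have "int (card (V M S)) = (\<Prod>i=1..m. sig_vec S' i) * sig_vec S M"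
      using IH neg nat_mult_int[of "exc S' + 1" "card (V m S')"] by (simp add: mult.commute)
    then show ?thesis unfolding M_def[symmetric] using pr by simp
  next
    case True
    then have SS: "S = insert M S'" "M \<notin> S'" by (auto simp: S'_def)
    show ?thesis
    proof (cases "even M")
      case False
      then have "card (V M S) = nat (exc S' + 1) * card (V m S')" using card_B[of M m S'] SS M_def by simp
      moreover have "sig_vec S M = exc S' + 1" using fg False by (simp add: sig_vec_def)
      ultimately have "int (card (V M S)) = (\<Prod>i=1..m. sig_vec S' i) * sig_vec S M"
        using IH neg nat_mult_int[of "exc S' + 1" "card (V m S')"] by (simp add: mult.commute)
      then show ?thesis unfolding M_def[symmetric] using pr by simp
    next
      case True
      then have "card (V M S) = nat (exc S') * card (V m S')" using card_C[of M m S'] SS M_def by simp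
      moreover have "sig_vec S M = exc S'" using fg True SS by (simp add: sig_vec_def)
      ultimately have "int (card (V M S)) = (\<Prod>i=1..m. sig_vec S' i) * sig_vec S M"
        using IH neg nat_mult_int[of "exc S'" "card (V m S')"] by (simp add: mult.commute)
      then show ?thesis unfolding M_def[symmetric] using pr by simp
    qed
  qed
qed

definition D :: "nat list \<Rightarrow> nat set" where
  "D w = {j. Suc j < length w \<and> w!Suc j < w!j}"

lemma D_Cons2: "D (x # y # r) = (if y < x then insert 0 (Suc ` D (y # r)) else Suc ` D (y # r))"
proof (rule set_eqI)
  fix j
  show "j \<in> D (x # y # r) \<longleftrightarrow> j \<in> (if y < x then insert 0 (Suc ` D (y # r)) else Suc ` D (y # r))"
    by (cases j) (auto simp: D_def)
qed

lemma D_short: "D [] = {}" "D [x] = {}"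
  by (auto simp: D_def)

lemma pall_map: "pall (map Some w) \<longleftrightarrow> (\<forall>j\<in>D w. even (w!j) \<and> odd (w!Suc j))"
proof (induction w rule: induct_list012)
  case (3 x y r)
  then show ?case by (auto simp: D_Cons2)
qed (auto simp: D_short)

lemma marks_map: "marks (map Some w) = (\<lambda>j. w!j) ` D w \<union> (\<lambda>j. w!Suc j) ` D w"
proof (induction w rule: induct_list012)
  case (3 x y r)
  then show ?case by (auto simp: D_Cons2 image_image)
qed (auto simp: D_short)

lemma vals_map[simp]: "vals (map Some w) = w"
  by (induction w) auto

lemma nones_map[simp]: "nones (map Some w) = 0"
  by (simp add: nones_def filter_empty_conv)

lemma nones0: "nones u = 0 \<Longrightarrow> u = map Some (vals u)"
  by (induction u rule: vals.induct) auto

lemma perm_facts: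
  assumes "\<sigma> permutes {1..N}" "w = map \<sigma> [1..<N+1]"
  shows "length w = N" "\<And>j. j < N \<Longrightarrow> w!j = \<sigma> (Suc j)" "distinct w" "set w = {1..N}"
    "descents \<sigma> N = Suc ` D w" "desc_tops \<sigma> N = (\<lambda>j. w!j) ` D w"
    "desc_bottoms \<sigma> N = (\<lambda>j. w!Suc j) ` D w"
proof -
  show l: "length w = N" using assms(2) by simp
  show nth: "w!j = \<sigma> (Suc j)" if "j < N" for j using assms(2) that by (simp del: upt_Suc)
  have inj: "inj_on \<sigma> {1..N}" using permutes_inj_on[OF assms(1)] .
  show "distinct w" using assms(2) inj by (simp add: distinct_map atLeastLessThanSuc_atLeastAtMost del: upt_Suc)
  show "set w = {1..N}" using assms(2) permutes_image[OF assms(1)]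
    by (simp add: atLeastLessThanSuc_atLeastAtMost del: upt_Suc)
  show de: "descents \<sigma> N = Suc ` D w"
  proof (rule set_eqI)
    fix i
    show "i \<in> descents \<sigma> N \<longleftrightarrow> i \<in> Suc ` D w"
    proof
      assume h: "i \<in> descents \<sigma> N"
      then obtain j where j: "i = Suc j" unfolding descents_def by (cases i) auto
      then have "j \<in> D w" using h l nth[of j] nth[of "Suc j"] by (auto simp: descents_def D_def)
      then show "i \<in> Suc ` D w" using j by blast
    next
      assume "i \<in> Suc ` D w"
      then obtain j where j: "i = Suc j" "j \<in> D w" by blast
      then show "i \<in> descents \<sigma> N" using l nth[of j] nth[of "Suc j"] by (auto simp: descents_def D_def)
    qed
  qed
  have Dl: "j \<in> D w \<Longrightarrow> Suc j < N" for j using l by (simp add: D_def)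
  show "desc_tops \<sigma> N = (\<lambda>j. w!j) ` D w"
    unfolding desc_tops_def de image_image
    by (rule image_cong) (auto dest: Dl simp: nth)
  show "desc_bottoms \<sigma> N = (\<lambda>j. w!Suc j) ` D w"
    unfolding desc_bottoms_def de image_image
    by (rule image_cong) (auto dest: Dl simp: nth)
qed

lemma G_in_V:
  assumes "\<sigma> permutes {1..2*n}" "exc S = 0"
  shows "map Some (map \<sigma> [1..<2*n+1]) \<in> V (2*n) S \<longleftrightarrow>
     \<sigma> \<in> X_set n \<and> desc_tops \<sigma> (2*n) \<union> desc_bottoms \<sigma> (2*n) = S"
proof -
  define w where "w = map \<sigma> [1..<2*n+1]"
  note f = perm_facts[OF assms(1) w_def]
  have Dl: "j \<in> D w \<Longrightarrow> Suc j < 2*n" for j using f(1) by (simp add: D_def)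
  have X0: "\<sigma> \<in> X_set n \<longleftrightarrow> (\<forall>j\<in>D w. even (\<sigma> (Suc j)) \<and> odd (\<sigma> (Suc (Suc j))))"
    unfolding X_set_def using assms(1) f(5) by auto
  have X1: "(\<forall>j\<in>D w. even (\<sigma> (Suc j)) \<and> odd (\<sigma> (Suc (Suc j)))) \<longleftrightarrow> (\<forall>j\<in>D w. even (w!j) \<and> odd (w!Suc j))"
  proof (rule ball_cong)
    fix j assume "j \<in> D w"
    then have s1: "Suc j < 2*n" using Dl by blast
    then have "j < 2*n" by simp
    note s1 this
    then show "(even (\<sigma> (Suc j)) \<and> odd (\<sigma> (Suc (Suc j)))) = (even (w!j) \<and> odd (w!Suc j))"
      using f(2) by simp
  qed simp
  have X: "\<sigma> \<in> X_set n \<longleftrightarrow> (\<forall>j\<in>D w. even (w!j) \<and> odd (w!Suc j))" using X0 X1 by simp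
  have "map Some w \<in> V (2*n) S \<longleftrightarrow> pall (map Some w) \<and> marks (map Some w) = S"
    using f(3,4) assms(2) by (simp add: V_def last_map)
  also have "\<dots> \<longleftrightarrow> \<sigma> \<in> X_set n \<and> desc_tops \<sigma> (2*n) \<union> desc_bottoms \<sigma> (2*n) = S"
    using X pall_map marks_map f(6,7) by simp
  finally show ?thesis using w_def by simp
qed

lemma primary_auto:
  assumes "\<sigma> \<in> X_set n" "desc_tops \<sigma> (2*n) \<union> desc_bottoms \<sigma> (2*n) = S" "is_signature n S"
  shows "primary_eod n \<sigma>"
  unfolding primary_eod_def
proof (intro conjI ballI impI)
  show "\<sigma> \<in> X_set n" by fact
  fix t b assume t: "t \<in> desc_tops \<sigma> (2*n)" and b: "b \<in> desc_bottoms \<sigma> (2*n)" and tb: "t > b"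
  have et: "even t" using t assms(1) by (auto simp: desc_tops_def X_set_def)
  have ob: "odd b" using b assms(1) by (auto simp: desc_bottoms_def X_set_def)
  have inS: "t \<in> S" "b \<in> S" using t b assms(2) by auto
  have sig: "S \<subseteq> {1..2*n}" "\<forall>j\<in>{1..n}. \<not> (2*j - 1 \<in> S \<and> 2*j \<in> S)"
    using assms(3) by (auto simp: is_signature_def)
  show "t - b \<ge> 3"
  proof (rule ccontr)
    assume "\<not> t - b \<ge> 3"
    then have tb1: "t = Suc b" using et ob tb by presburger
    define j where "j = t div 2"
    have "t = 2*j" using et j_def by simp
    moreover have "j \<in> {1..n}" using inS(1) sig(1) \<open>t = 2*j\<close> by auto
    moreover have "2*j - 1 = b" using tb1 \<open>t = 2*j\<close> by simp
    ultimately show False using sig(2) inS by blast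
  qed
qed

theorem mainTheorem3:
  fixes n :: nat and S :: "nat set"
  assumes "n \<ge> 1" and "is_signature n S"
  shows "int (card {\<sigma>. primary_eod n \<sigma> \<and>
                   desc_tops \<sigma> (2*n) \<union> desc_bottoms \<sigma> (2*n) = S})
         = (\<Prod>i=1..2*n. sig_vec S i)"
proof -
  let ?N = "2*n"
  let ?G = "\<lambda>\<sigma>. map Some (map \<sigma> [1..<?N+1])"
  have sub: "S \<subseteq> {1..?N}" using assms(2) by (simp add: is_signature_def)
  have e0: "exc S = 0" using assms(2) by (simp add: is_signature_def exc_def)
  have A: "{\<sigma>. primary_eod n \<sigma> \<and> desc_tops \<sigma> ?N \<union> desc_bottoms \<sigma> ?N = S}
      = {\<sigma>. \<sigma> permutes {1..?N} \<and> ?G \<sigma> \<in> V ?N S}"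
  proof (rule set_eqI, rule iffI)
    fix \<sigma> assume "\<sigma> \<in> {\<sigma>. primary_eod n \<sigma> \<and> desc_tops \<sigma> ?N \<union> desc_bottoms \<sigma> ?N = S}"
    then have h: "\<sigma> \<in> X_set n" "desc_tops \<sigma> ?N \<union> desc_bottoms \<sigma> ?N = S"
      by (auto simp: primary_eod_def)
    have p: "\<sigma> permutes {1..?N}" using h(1) by (simp add: X_set_def)
    then show "\<sigma> \<in> {\<sigma>. \<sigma> permutes {1..?N} \<and> ?G \<sigma> \<in> V ?N S}" using G_in_V[OF p e0] h by simp
  next
    fix \<sigma> assume "\<sigma> \<in> {\<sigma>. \<sigma> permutes {1..?N} \<and> ?G \<sigma> \<in> V ?N S}"
    then have p: "\<sigma> permutes {1..?N}" and g: "?G \<sigma> \<in> V ?N S" by auto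
    then have h: "\<sigma> \<in> X_set n" "desc_tops \<sigma> ?N \<union> desc_bottoms \<sigma> ?N = S"
      using G_in_V[OF p e0] by auto
    then show "\<sigma> \<in> {\<sigma>. primary_eod n \<sigma> \<and> desc_tops \<sigma> ?N \<union> desc_bottoms \<sigma> ?N = S}"
      using primary_auto[OF h assms(2)] by simp
  qed
  have bij: "bij_betw ?G {\<sigma>. \<sigma> permutes {1..?N} \<and> ?G \<sigma> \<in> V ?N S} (V ?N S)"
  proof (rule bij_betw_imageI)
    show "inj_on ?G {\<sigma>. \<sigma> permutes {1..?N} \<and> ?G \<sigma> \<in> V ?N S}"
    proof (rule inj_onI)
      fix \<sigma> \<tau>
      assume s: "\<sigma> \<in> {\<sigma>. \<sigma> permutes {1..?N} \<and> ?G \<sigma> \<in> V ?N S}"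
        and t: "\<tau> \<in> {\<sigma>. \<sigma> permutes {1..?N} \<and> ?G \<sigma> \<in> V ?N S}" and eq: "?G \<sigma> = ?G \<tau>"
      have "map \<sigma> [1..<?N+1] = map \<tau> [1..<?N+1]" using eq by (simp add: map_injective inj_on_def)
      then have "\<forall>i\<in>{1..?N}. \<sigma> i = \<tau> i" by (simp add: atLeastLessThanSuc_atLeastAtMost del: upt_Suc)
      moreover have "\<forall>i. i \<notin> {1..?N} \<longrightarrow> \<sigma> i = \<tau> i"
        using s t permutes_not_in by (metis (no_types, lifting) mem_Collect_eq)
      ultimately show "\<sigma> = \<tau>" by blast
    qed
    show "?G ` {\<sigma>. \<sigma> permutes {1..?N} \<and> ?G \<sigma> \<in> V ?N S} = V ?N S"
    proof
      show "?G ` {\<sigma>. \<sigma> permutes {1..?N} \<and> ?G \<sigma> \<in> V ?N S} \<subseteq> V ?N S" by blast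
      show "V ?N S \<subseteq> ?G ` {\<sigma>. \<sigma> permutes {1..?N} \<and> ?G \<sigma> \<in> V ?N S}"
      proof
        fix u assume u: "u \<in> V ?N S"
        define w where "w = vals u"
        have uw: "u = map Some w" using u e0 nones0 w_def by (simp add: V_def)
        have dw: "distinct w" "set w = {1..?N}" using u w_def by (auto simp: V_def)
        have lw: "length w = ?N" using distinct_card[OF dw(1)] dw(2) by simp
        define \<sigma> where "\<sigma> = (\<lambda>i. if i \<in> {1..?N} then w!(i-1) else i)"
        have bj: "bij_betw \<sigma> {1..?N} {1..?N}"
        proof -
          have b1: "bij_betw (\<lambda>i. i - 1) {1..?N} {..<?N}"
            by (rule bij_betw_byWitness[where f' = Suc]) auto
          have b2: "bij_betw ((!) w) {..<?N} {1..?N}"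
            using bij_betw_nth[OF dw(1)] lw dw(2) by simp
          have "bij_betw ((!) w \<circ> (\<lambda>i. i - 1)) {1..?N} {1..?N}"
            by (rule bij_betw_trans[OF b1 b2])
          then show ?thesis
            by (rule bij_betw_cong[THEN iffD1, rotated]) (simp add: \<sigma>_def)
        qed
        have p: "\<sigma> permutes {1..?N}"
          by (rule bij_imp_permutes[OF bj]) (auto simp: \<sigma>_def)
        have "map \<sigma> [1..<?N+1] = w"
        proof (rule nth_equalityI)
          show "length (map \<sigma> [1..<?N+1]) = length w" using lw by simp
          fix i assume "i < length (map \<sigma> [1..<?N+1])"
          then have i: "i < ?N" by (simp del: upt_Suc)
          have "[1..<?N+1] ! i = 1 + i" using i by (intro nth_upt) simp
          then have "map \<sigma> [1..<?N+1] ! i = \<sigma> (1 + i)" using i by (simp del: upt_Suc)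
          also have "\<dots> = w ! i" using i by (simp add: \<sigma>_def)
          finally show "map \<sigma> [1..<?N+1] ! i = w ! i" .
        qed
        then have "?G \<sigma> = u" using uw by simp
        then show "u \<in> ?G ` {\<sigma>. \<sigma> permutes {1..?N} \<and> ?G \<sigma> \<in> V ?N S}"
          using p u by (intro image_eqI[where x = \<sigma>]) auto
      qed
    qed
  qed
  have "card {\<sigma>. primary_eod n \<sigma> \<and> desc_tops \<sigma> ?N \<union> desc_bottoms \<sigma> ?N = S} = card (V ?N S)"
    unfolding A using bij_betw_same_card[OF bij] .
  then show ?thesis using main_count[OF sub] by simp
qed

end
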